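(* Let $\mathcal{G}$ be an anonymous polymatrix game, fix an initial joint action $a_0$, a step-size sequence $(\alpha_k)_{k\ge1}$ in $(0,1]$ with $\sum_k\alpha_k=\infty$, $\sum_k\alpha_k^2<\infty$, and a deterministic tie-breaking rule for $\arg\max$. Run fictitious play (FP) and aggregate fictitious play (agg-FP), both from $a_0$ with these step sizes and tie-breaking rule. Then agg-FP converges, i.e. $\lim_{k\to\infty}\inf_{\pi_*\in\mathbb{NE}(\mathcal{G})}\|\hat\gamma_k-\pi_*\|=0$, if and only if FP converges, i.e. $\lim_{k\to\infty}\inf_{\pi_*\in\mathbb{NE}(\mathcal{G})}\|\hat\pi_k-\pi_*\|=0$.
   Context: Polymatrix: $r^i(a^i,a^{-i})=\sum_{j\ne i}r^{ij}(a^i,a^j)$. Anonymous: common action set $\mathbb{A}$ ($|\mathbb{A}|=n$), each $r^i(a^i,a^{-i})$ invariant under permutations of $a^{-i}$; then $r^i(a^i,a^{-i})=\bar r^i(a^i,\sigma(a^{-i}))$ with $\sigma(a^{-i})=\sum_{j\ne i}\mathds{1}\{a^j\}\in\mathbb{X}=\{\xi\in\mathbb{N}^n:\sum_l\xi_l=N-1\}$. $R^i(a^i,\pi^{-i})=\sum_{a^{-i}}r^i(a^i,a^{-i})\prod_{j\ne i}\pi^j(a^j)$, $\bar R^i(a^i,\mu)=\sum_{x}\bar r^i(a^i,x)\mu(x)$. FP: $\hat\pi^j_0=\mathds{1}\{a^j_0\}$, and for $k\ge1$, $\hat\pi^j_k=\hat\pi^j_{k-1}+\alpha_k(\mathds{1}\{a^j_k\}-\hat\pi^j_{k-1})$,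 with actions $a^i_{k+1}\in\arg\max_{a^i}R^i(a^i,\hat\pi^{-i}_k)$ (for $k\ge0$). agg-FP: $\hat\mu^i_0=\mathds{1}\{\sigma(a^{-i}_0)\}$, for $k\ge1$ $\hat\mu^i_k=\hat\mu^i_{k-1}+\alpha_k(\mathds{1}\{\sigma(a^{-i}_k)\}-\hat\mu^i_{k-1})$, actions $a^i_{k+1}\in\arg\max_{a^i}\bar R^i(a^i,\hat\mu^i_k)$, and empirical action frequencies $\hat\gamma^i_0=\mathds{1}\{a^i_0\}$, $\hat\gamma^i_k=\hat\gamma^i_{k-1}+\alpha_k(\mathds{1}\{a^i_k\}-\hat\gamma^i_{k-1})$. $\mathbb{NE}(\mathcal{G})$ is the set of mixed Nash equilibria: profiles $\pi_*$ with $R^i(\pi^i_*,\pi^{-i}_* )\ge R^i(\pi^i,\pi^{-i}_* )$ for all $i$ and $\pi^i\in\Delta(\mathbb{A})$. *)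

theory Defs
  imports "HOL-Analysis.Analysis"
begin

text \<open>Players: a finite type 'i (N = CARD('i)); common action set: a finite type 'a (n = CARD('a)).
  Mixed strategies are functions 'a => real; mixed profiles are 'i => 'a => real.\<close>

definition polymatrix :: "('i::finite \<Rightarrow> ('i \<Rightarrow> 'a::finite) \<Rightarrow> real) \<Rightarrow> bool" where
  "polymatrix r \<longleftrightarrow> (\<exists>rr :: 'i \<Rightarrow> 'i \<Rightarrow> 'a \<Rightarrow> 'a \<Rightarrow> real.
      \<forall>i a. r i a = (\<Sum>j\<in>UNIV - {i}. rr i j (a i) (a j)))"

definition anonymous :: "('i::finite \<Rightarrow> ('i \<Rightarrow> 'a::finite) \<Rightarrow> real) \<Rightarrow> bool" where
  "anonymous r \<longleftrightarrow> (\<forall>i a p. p permutes (UNIV - {i}) \<longrightarrow> r i (a \<circ> p) = r i a)"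

definition agg :: "'i::finite \<Rightarrow> ('i \<Rightarrow> 'a::finite) \<Rightarrow> ('a \<Rightarrow> nat)" where
  "agg i a = (\<lambda>x. card {j. j \<noteq> i \<and> a j = x})"

definition aggset :: "('i::finite) itself \<Rightarrow> ('a::finite \<Rightarrow> nat) set" where
  "aggset _ = {\<xi>. (\<Sum>l\<in>UNIV. \<xi> l) = CARD('i) - 1}"

text \<open>Aggregate reward rbar i ai xi = r i a for any a with a i = ai and agg i a = xi
  (well defined for anonymous games).\<close>
definition rbar :: "('i::finite \<Rightarrow> ('i \<Rightarrow> 'a::finite) \<Rightarrow> real) \<Rightarrow> 'i \<Rightarrow> 'a \<Rightarrow> ('a \<Rightarrow> nat) \<Rightarrow> real" where
  "rbar r i ai \<xi> = r i (SOME a. a i = ai \<and> agg i a = \<xi>)"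

definition Rpure :: "('i::finite \<Rightarrow> ('i \<Rightarrow> 'a::finite) \<Rightarrow> real) \<Rightarrow> 'i \<Rightarrow> 'a \<Rightarrow> ('i \<Rightarrow> 'a \<Rightarrow> real) \<Rightarrow> real" where
  "Rpure r i ai \<pi> = (\<Sum>b\<in>{b. b i = ai}. r i b * (\<Prod>j\<in>UNIV - {i}. \<pi> j (b j)))"

definition Rmixed :: "('i::finite \<Rightarrow> ('i \<Rightarrow> 'a::finite) \<Rightarrow> real) \<Rightarrow> 'i \<Rightarrow> ('a \<Rightarrow> real) \<Rightarrow> ('i \<Rightarrow> 'a \<Rightarrow> real) \<Rightarrow> real" where
  "Rmixed r i \<rho> \<pi> = (\<Sum>ai\<in>UNIV. \<rho> ai * Rpure r i ai \<pi>)"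

definition Rbar :: "('i::finite \<Rightarrow> ('i \<Rightarrow> 'a::finite) \<Rightarrow> real) \<Rightarrow> 'i \<Rightarrow> 'a \<Rightarrow> (('a \<Rightarrow> nat) \<Rightarrow> real) \<Rightarrow> real" where
  "Rbar r i ai \<mu> = (\<Sum>\<xi>\<in>aggset TYPE('i). rbar r i ai \<xi> * \<mu> \<xi>)"

definition mixed_strats :: "('a::finite \<Rightarrow> real) set" where
  "mixed_strats = {\<rho>. (\<forall>x. 0 \<le> \<rho> x) \<and> (\<Sum>x\<in>UNIV. \<rho> x) = 1}"

definition NE :: "('i::finite \<Rightarrow> ('i \<Rightarrow> 'a::finite) \<Rightarrow> real) \<Rightarrow> ('i \<Rightarrow> 'a \<Rightarrow> real) set" where
  "NE r = {\<pi>. (\<forall>i. \<pi> i \<in> mixed_strats) \<and>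
              (\<forall>i. \<forall>\<rho>\<in>mixed_strats. Rmixed r i (\<pi> i) \<pi> \<ge> Rmixed r i \<rho> \<pi>)}"

definition argmaxset :: "('a::finite \<Rightarrow> real) \<Rightarrow> 'a set" where
  "argmaxset f = {x. \<forall>y. f y \<le> f x}"

definition tie_break :: "('i \<Rightarrow> 'a set \<Rightarrow> 'a) \<Rightarrow> bool" where
  "tie_break tb \<longleftrightarrow> (\<forall>i S. S \<noteq> {} \<longrightarrow> tb i S \<in> S)"

definition ind :: "bool \<Rightarrow> real" where "ind b = (if b then 1 else 0)"

text \<open>FP: state at step k is (a_k, pihat_k).\<close>
fun fp :: "('i::finite \<Rightarrow> ('i \<Rightarrow> 'a::finite) \<Rightarrow> real) \<Rightarrow> ('i \<Rightarrow> 'a set \<Rightarrow> 'a) \<Rightarrow> (nat \<Rightarrow> real)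
            \<Rightarrow> ('i \<Rightarrow> 'a) \<Rightarrow> nat \<Rightarrow> ('i \<Rightarrow> 'a) \<times> ('i \<Rightarrow> 'a \<Rightarrow> real)" where
  "fp r tb \<alpha> a0 0 = (a0, \<lambda>j x. ind (a0 j = x))"
| "fp r tb \<alpha> a0 (Suc k) =
     (let (a, \<pi>) = fp r tb \<alpha> a0 k;
          a' = (\<lambda>i. tb i (argmaxset (\<lambda>ai. Rpure r i ai \<pi>)))
      in (a', \<lambda>j x. \<pi> j x + \<alpha> (Suc k) * (ind (a' j = x) - \<pi> j x)))"

text \<open>agg-FP: state at step k is (a_k, muhat_k, gammahat_k).\<close>
fun aggfp :: "('i::finite \<Rightarrow> ('i \<Rightarrow> 'a::finite) \<Rightarrow> real) \<Rightarrow> ('i \<Rightarrow> 'a set \<Rightarrow> 'a) \<Rightarrow> (nat \<Rightarrow> real)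
            \<Rightarrow> ('i \<Rightarrow> 'a) \<Rightarrow> nat
            \<Rightarrow> ('i \<Rightarrow> 'a) \<times> ('i \<Rightarrow> ('a \<Rightarrow> nat) \<Rightarrow> real) \<times> ('i \<Rightarrow> 'a \<Rightarrow> real)" where
  "aggfp r tb \<alpha> a0 0 = (a0, \<lambda>i \<xi>. ind (agg i a0 = \<xi>), \<lambda>i x. ind (a0 i = x))"
| "aggfp r tb \<alpha> a0 (Suc k) =
     (let (a, \<mu>, \<gamma>) = aggfp r tb \<alpha> a0 k;
          a' = (\<lambda>i. tb i (argmaxset (\<lambda>ai. Rbar r i ai (\<mu> i))))
      in (a', \<lambda>i \<xi>. \<mu> i \<xi> + \<alpha> (Suc k) * (ind (agg i a' = \<xi>) - \<mu> i \<xi>),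
              \<lambda>i x. \<gamma> i x + \<alpha> (Suc k) * (ind (a' i = x) - \<gamma> i x)))"

definition fp_pi where "fp_pi r tb \<alpha> a0 k = snd (fp r tb \<alpha> a0 k)"
definition aggfp_gamma where "aggfp_gamma r tb \<alpha> a0 k = snd (snd (aggfp r tb \<alpha> a0 k))"

definition pdist :: "('i::finite \<Rightarrow> 'a::finite \<Rightarrow> real) \<Rightarrow> ('i \<Rightarrow> 'a \<Rightarrow> real) \<Rightarrow> real" where
  "pdist p q = sqrt (\<Sum>i\<in>UNIV. \<Sum>x\<in>UNIV. (p i x - q i x)\<^sup>2)"

end

theory Submission
  imports Defs
begin

lemma split3:
  fixes f :: "'i::finite \<Rightarrow> real"
  assumes "j \<noteq> i" "k \<noteq> i" "j \<noteq> k"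
  shows "(\<Sum>l\<in>UNIV - {i}. f l) = f j + f k + (\<Sum>l\<in>UNIV - {i} - {j} - {k}. f l)"
proof -
  have "(\<Sum>l\<in>UNIV - {i}. f l) = f j + (\<Sum>l\<in>UNIV - {i} - {j}. f l)"
    using assms by (subst sum.remove[of _ j]) auto
  also have "(\<Sum>l\<in>UNIV - {i} - {j}. f l) = f k + (\<Sum>l\<in>UNIV - {i} - {j} - {k}. f l)"
    using assms by (subst sum.remove[of _ k]) auto
  finally show ?thesis by simp
qed

lemma swap_id:
  fixes r :: "'i::finite \<Rightarrow> ('i \<Rightarrow> 'a::finite) \<Rightarrow> real"
  assumes hr: "\<And>i a. r i a = (\<Sum>j\<in>UNIV - {i}. rr i j (a i) (a j))"
    and an: "anonymous r" and ne: "j \<noteq> i" "k \<noteq> i" "j \<noteq> k"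
  shows "rr i j ai x + rr i k ai y = rr i j ai y + rr i k ai x"
proof -
  define a where "a = (\<lambda>l. if l = j then x else if l = k then y else ai)"
  define p where "p = Transposition.transpose j k"
  have pp: "p permutes (UNIV - {i})" unfolding p_def using ne by (intro permutes_swap_id) auto
  have eq: "r i (a \<circ> p) = r i a" using an pp unfolding anonymous_def by blast
  have ap: "a \<circ> p = (\<lambda>l. if l = j then y else if l = k then x else ai)"
    using ne by (auto simp: a_def p_def Transposition.transpose_def fun_eq_iff)
  have ai: "a i = ai" "(a \<circ> p) i = ai" using ne unfolding ap by (auto simp: a_def)
  have "r i a = rr i j ai x + rr i k ai y + (\<Sum>l\<in>UNIV - {i} - {j} - {k}. rr i l ai ai)"
    unfolding hr ai using ne by (subst split3[OF ne]) (auto simp: a_def intro!: sum.cong)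
  moreover have "r i (a \<circ> p) = rr i j ai y + rr i k ai x + (\<Sum>l\<in>UNIV - {i} - {j} - {k}. rr i l ai ai)"
    unfolding hr ai using ne by (subst split3[OF ne]) (auto simp: ap intro!: sum.cong)
  ultimately show ?thesis using eq by linarith
qed

lemma count_sum:
  fixes f :: "'a::finite \<Rightarrow> real" and A :: "'i set"
  assumes "finite A"
  shows "(\<Sum>l\<in>A. f (a l)) = (\<Sum>x\<in>UNIV. real (card {l\<in>A. a l = x}) * f x)"
proof -
  have "(\<Sum>l\<in>A. f (a l)) = (\<Sum>x\<in>UNIV. \<Sum>l\<in>{l\<in>A. a l = x}. f (a l))"
    using assms by (rule sum.group[symmetric]) auto
  also have "\<dots> = (\<Sum>x\<in>UNIV. real (card {l\<in>A. a l = x}) * f x)"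
    by (intro sum.cong refl) auto
  finally show ?thesis .
qed

lemma decomp:
  fixes r :: "'i::finite \<Rightarrow> ('i \<Rightarrow> 'a::finite) \<Rightarrow> real"
  assumes hr: "\<And>i a. r i a = (\<Sum>j\<in>UNIV - {i}. rr i j (a i) (a j))"
    and an: "anonymous r"
  shows "r i a = (\<Sum>l\<in>UNIV - {i}. rr i l (a i) x0
           + (rr i (SOME k. k \<noteq> i) (a i) (a l) - rr i (SOME k. k \<noteq> i) (a i) x0))"
  unfolding hr[of i a]
proof (intro sum.cong refl)
  fix l assume l: "l \<in> UNIV - {i}"
  define k where "k = (SOME k. k \<noteq> i)"
  have k: "k \<noteq> i" unfolding k_def using l by (metis (mono_tags) Diff_iff insertI1 someI_ex)
  show "rr i l (a i) (a l) = rr i l (a i) x0 + (rr i (SOME k. k \<noteq> i) (a i) (a l) - rr i (SOME k. k \<noteq> i) (a i) x0)"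
  proof (cases "l = k")
    case True then show ?thesis by (simp add: k_def[symmetric])
  next
    case False
    have "rr i l (a i) (a l) + rr i k (a i) x0 = rr i l (a i) x0 + rr i k (a i) (a l)"
      using swap_id[OF hr an, of l i k] l k False by auto
    then show ?thesis by (simp add: k_def[symmetric])
  qed
qed

lemma agg_dep:
  fixes r :: "'i::finite \<Rightarrow> ('i \<Rightarrow> 'a::finite) \<Rightarrow> real"
  assumes hr: "\<And>i a. r i a = (\<Sum>j\<in>UNIV - {i}. rr i j (a i) (a j))"
    and an: "anonymous r" and eq: "a i = b i" "agg i a = agg i b"
  shows "r i a = r i b"
proof -
  define k where "k = (SOME k. k \<noteq> (i::'i))"
  define g where "g = (\<lambda>x. rr i k (a i) x - rr i k (a i) undefined)"
  have e: "\<And>c. c i = a i \<Longrightarrow> r i c = (\<Sum>l\<in>UNIV - {i}. rr i l (a i) undefined) + (\<Sum>x\<in>UNIV. real (agg i c x) * g x)"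
  proof -
    fix c :: "'i \<Rightarrow> 'a" assume ci: "c i = a i"
    have "r i c = (\<Sum>l\<in>UNIV - {i}. rr i l (a i) undefined) + (\<Sum>l\<in>UNIV - {i}. g (c l))"
      unfolding decomp[OF hr an, of i c undefined] sum.distrib ci g_def k_def ..
    also have "(\<Sum>l\<in>UNIV - {i}. g (c l)) = (\<Sum>x\<in>UNIV. real (card {l\<in>UNIV - {i}. c l = x}) * g x)"
      by (rule count_sum) simp
    also have "\<dots> = (\<Sum>x\<in>UNIV. real (agg i c x) * g x)"
      unfolding agg_def by (intro sum.cong refl arg_cong[where f="\<lambda>n. real n * _"] arg_cong[where f=card]) auto
    finally show "r i c = (\<Sum>l\<in>UNIV - {i}. rr i l (a i) undefined) + (\<Sum>x\<in>UNIV. real (agg i c x) * g x)" .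
  qed
  show ?thesis using e[of a] e[of b] eq by simp
qed


lemma rbar_eq:
  fixes r :: "'i::finite \<Rightarrow> ('i \<Rightarrow> 'a::finite) \<Rightarrow> real"
  assumes hr: "\<And>i a. r i a = (\<Sum>j\<in>UNIV - {i}. rr i j (a i) (a j))"
    and an: "anonymous r"
  shows "rbar r i ai (agg i b) = (\<Sum>j\<in>UNIV - {i}. rr i j ai (b j))"
proof -
  have ex: "\<exists>c. c i = ai \<and> agg i c = agg i b"
    by (rule exI[of _ "b(i:=ai)"]) (auto simp: agg_def intro!: ext arg_cong[where f=card])
  define c where "c = (SOME c. c i = ai \<and> agg i c = agg i b)"
  have c: "c i = ai \<and> agg i c = agg i b" unfolding c_def by (rule someI_ex[OF ex])
  have "agg i (b(i:=ai)) = agg i b" unfolding agg_def by (intro ext arg_cong[where f=card]) auto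
  then have "r i c = r i (b(i:=ai))" using c by (intro agg_dep[OF hr an]) auto
  also have "\<dots> = (\<Sum>j\<in>UNIV - {i}. rr i j ai (b j))" unfolding hr by (intro sum.cong) auto
  finally show ?thesis unfolding rbar_def c_def .
qed

lemma agg_in: "agg (i::'i::finite) b \<in> aggset TYPE('i::finite)"
proof -
  have "(\<Sum>x\<in>UNIV. agg i b x) = (\<Sum>x\<in>(UNIV::'a set). \<Sum>l\<in>{l\<in>UNIV - {i}. b l = x}. (1::nat))"
    unfolding agg_def by (intro sum.cong refl) (auto intro: arg_cong[where f=card])
  also have "\<dots> = (\<Sum>l\<in>UNIV - {i}. (1::nat))" by (rule sum.group) auto
  also have "\<dots> = CARD('i) - 1" by simp
  finally show ?thesis unfolding aggset_def by simp
qed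

lemma aggset_finite: "finite (aggset TYPE('i::finite) :: ('a::finite \<Rightarrow> nat) set)"
proof (rule finite_subset)
  show "aggset TYPE('i) \<subseteq> (PiE UNIV (\<lambda>_. {..CARD('i) - 1}) :: ('a \<Rightarrow> nat) set)"
  proof
    fix \<xi> :: "'a \<Rightarrow> nat" assume "\<xi> \<in> aggset TYPE('i)"
    then have s: "(\<Sum>l\<in>UNIV. \<xi> l) = CARD('i) - 1" by (simp add: aggset_def)
    have "\<And>l. \<xi> l \<le> CARD('i) - 1" unfolding s[symmetric] by (rule member_le_sum) auto
    then show "\<xi> \<in> PiE UNIV (\<lambda>_. {..CARD('i) - 1})" by (simp add: PiE_UNIV_domain)
  qed
  show "finite (PiE UNIV (\<lambda>_. {..CARD('i) - 1}) :: ('a \<Rightarrow> nat) set)" by (rule finite_PiE) auto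
qed

lemma Rbar_ind:
  fixes r :: "'i::finite \<Rightarrow> ('i \<Rightarrow> 'a::finite) \<Rightarrow> real"
  assumes hr: "\<And>i a. r i a = (\<Sum>j\<in>UNIV - {i}. rr i j (a i) (a j))"
    and an: "anonymous r"
  shows "Rbar r i ai (\<lambda>\<xi>. ind (agg i b = \<xi>)) = (\<Sum>j\<in>UNIV - {i}. \<Sum>x\<in>UNIV. rr i j ai x * ind (b j = x))"
proof -
  have "Rbar r i ai (\<lambda>\<xi>. ind (agg i b = \<xi>)) = rbar r i ai (agg i b)"
    unfolding Rbar_def ind_def using agg_in[of i b] aggset_finite[where 'i='i and 'a='a]
    by (simp add: if_distrib sum.delta' cong: if_cong)
  also have "\<dots> = (\<Sum>j\<in>UNIV - {i}. rr i j ai (b j))" by (rule rbar_eq[OF hr an])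
  also have "\<dots> = (\<Sum>j\<in>UNIV - {i}. \<Sum>x\<in>UNIV. rr i j ai x * ind (b j = x))"
    unfolding ind_def by (simp add: if_distrib cong: if_cong)
  finally show ?thesis .
qed

lemma Rbar_lin: "Rbar r i ai (\<lambda>\<xi>. \<mu> \<xi> + c * (\<nu> \<xi> - \<mu> \<xi>)) = Rbar r i ai \<mu> + c * (Rbar r i ai \<nu> - Rbar r i ai \<mu>)"
  unfolding Rbar_def by (simp add: algebra_simps sum.distrib sum_subtractf sum_distrib_left)

lemma marginal:
  fixes \<pi> :: "'i::finite \<Rightarrow> 'a::finite \<Rightarrow> real"
  assumes ji: "j \<noteq> i" and s1: "\<And>l. (\<Sum>x\<in>UNIV. \<pi> l x) = 1"
  shows "(\<Sum>b\<in>{b. b i = ai}. h (b j) * (\<Prod>l\<in>UNIV - {i}. \<pi> l (b l))) = (\<Sum>x\<in>UNIV. h x * \<pi> j x)"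
proof -
  define f where "f = (\<lambda>l x. if l = i then ind (x = ai) else if l = j then h x * \<pi> j x else \<pi> l x)"
  have "(\<Prod>l\<in>UNIV. \<Sum>x\<in>UNIV. f l x) = (\<Sum>g\<in>PiE UNIV (\<lambda>_. UNIV). \<Prod>l\<in>UNIV. f l (g l))"
    by (rule prod_sum_PiE) auto
  moreover have "(\<Prod>l\<in>UNIV. \<Sum>x\<in>UNIV. f l x) = (\<Prod>l\<in>UNIV. if l = j then (\<Sum>x\<in>UNIV. h x * \<pi> j x) else 1)"
  proof (intro prod.cong refl)
    fix l :: 'i
    have "(\<Sum>x\<in>UNIV. ind (x = ai)) = 1" by (simp add: ind_def)
    then show "(\<Sum>x\<in>UNIV. f l x) = (if l = j then (\<Sum>x\<in>UNIV. h x * \<pi> j x) else 1)"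
      using ji s1 by (cases "l = i") (auto simp: f_def)
  qed
  moreover have "(\<Prod>l\<in>UNIV. if l = j then (\<Sum>x\<in>UNIV. h x * \<pi> j x) else 1) = (\<Sum>x\<in>UNIV. h x * \<pi> j x)"
    by (subst prod.delta) auto
  moreover have "\<And>g. (\<Prod>l\<in>UNIV. f l (g l)) = (if g i = ai then h (g j) * (\<Prod>l\<in>UNIV - {i}. \<pi> l (g l)) else 0)"
  proof -
    fix g :: "'i \<Rightarrow> 'a"
    have "(\<Prod>l\<in>UNIV. f l (g l)) = f i (g i) * (\<Prod>l\<in>UNIV - {i}. f l (g l))"
      by (subst prod.remove[of _ i]) auto
    also have "(\<Prod>l\<in>UNIV - {i}. f l (g l)) = f j (g j) * (\<Prod>l\<in>UNIV - {i} - {j}. f l (g l))"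
      using ji by (subst prod.remove[of _ j]) auto
    also have "(\<Prod>l\<in>UNIV - {i} - {j}. f l (g l)) = (\<Prod>l\<in>UNIV - {i} - {j}. \<pi> l (g l))"
      by (intro prod.cong refl) (auto simp: f_def)
    also have "(\<Prod>l\<in>UNIV - {i}. \<pi> l (g l)) = \<pi> j (g j) * (\<Prod>l\<in>UNIV - {i} - {j}. \<pi> l (g l))"
      using ji by (subst prod.remove[of _ j]) auto
    ultimately show "(\<Prod>l\<in>UNIV. f l (g l)) = (if g i = ai then h (g j) * (\<Prod>l\<in>UNIV - {i}. \<pi> l (g l)) else 0)"
      using ji by (simp add: f_def ind_def)
  qed
  moreover have "(\<Sum>b\<in>{b. b i = ai}. h (b j) * (\<Prod>l\<in>UNIV - {i}. \<pi> l (b l)))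
     = (\<Sum>b\<in>UNIV. if b i = ai then h (b j) * (\<Prod>l\<in>UNIV - {i}. \<pi> l (b l)) else 0)"
    by (simp add: sum.If_cases Collect_conv_if)
  ultimately show ?thesis by simp
qed


definition Lf :: "('i \<Rightarrow> 'i \<Rightarrow> 'a \<Rightarrow> 'a \<Rightarrow> real) \<Rightarrow> 'i::finite \<Rightarrow> 'a::finite \<Rightarrow> ('i \<Rightarrow> 'a \<Rightarrow> real) \<Rightarrow> real" where
  "Lf rr i ai \<pi> = (\<Sum>j\<in>UNIV - {i}. \<Sum>x\<in>UNIV. rr i j ai x * \<pi> j x)"

lemma Lf_lin: "Lf rr i ai (\<lambda>j x. \<pi> j x + c * (\<nu> j x - \<pi> j x)) = Lf rr i ai \<pi> + c * (Lf rr i ai \<nu> - Lf rr i ai \<pi>)"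
  unfolding Lf_def by (simp add: algebra_simps sum.distrib sum_subtractf sum_distrib_left)

lemma Rpure_Lf:
  fixes r :: "'i::finite \<Rightarrow> ('i \<Rightarrow> 'a::finite) \<Rightarrow> real"
  assumes hr: "\<And>i a. r i a = (\<Sum>j\<in>UNIV - {i}. rr i j (a i) (a j))"
    and s1: "\<And>l. (\<Sum>x\<in>UNIV. \<pi> l x) = 1"
  shows "Rpure r i ai \<pi> = Lf rr i ai \<pi>"
proof -
  have "Rpure r i ai \<pi> = (\<Sum>b\<in>{b. b i = ai}. \<Sum>j\<in>UNIV - {i}. rr i j ai (b j) * (\<Prod>l\<in>UNIV - {i}. \<pi> l (b l)))"
    unfolding Rpure_def hr by (intro sum.cong refl) (simp add: sum_distrib_right)
  also have "\<dots> = (\<Sum>j\<in>UNIV - {i}. \<Sum>b\<in>{b. b i = ai}. rr i j ai (b j) * (\<Prod>l\<in>UNIV - {i}. \<pi> l (b l)))"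
    by (rule sum.swap)
  also have "\<dots> = Lf rr i ai \<pi>"
    unfolding Lf_def by (intro sum.cong refl marginal s1) auto
  finally show ?thesis .
qed

lemma inv:
  fixes r :: "'i::finite \<Rightarrow> ('i \<Rightarrow> 'a::finite) \<Rightarrow> real"
  assumes hr: "\<And>i a. r i a = (\<Sum>j\<in>UNIV - {i}. rr i j (a i) (a j))"
    and an: "anonymous r"
  shows "fst (aggfp r tb \<alpha> a0 k) = fst (fp r tb \<alpha> a0 k) \<and> snd (snd (aggfp r tb \<alpha> a0 k)) = snd (fp r tb \<alpha> a0 k)
    \<and> (\<forall>l. (\<Sum>x\<in>UNIV. snd (fp r tb \<alpha> a0 k) l x) = 1)
    \<and> (\<forall>i ai. Rbar r i ai (fst (snd (aggfp r tb \<alpha> a0 k)) i) = Lf rr i ai (snd (fp r tb \<alpha> a0 k)))"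
proof (induction k)
  case 0
  have "\<And>l. (\<Sum>x\<in>UNIV. ind (a0 l = x)) = 1" by (simp add: ind_def)
  moreover have "\<And>i ai. Rbar r i ai (\<lambda>\<xi>. ind (agg i a0 = \<xi>)) = Lf rr i ai (\<lambda>j x. ind (a0 j = x))"
    unfolding Lf_def by (rule Rbar_ind[OF hr an])
  ultimately show ?case by simp
next
  case (Suc k)
  obtain a \<mu> \<gamma> where A: "aggfp r tb \<alpha> a0 k = (a, \<mu>, \<gamma>)" by (metis prod_cases3)
  obtain a' \<pi> where F: "fp r tb \<alpha> a0 k = (a', \<pi>)" by (metis prod.exhaust)
  have IH: "\<gamma> = \<pi>" "\<And>l. (\<Sum>x\<in>UNIV. \<pi> l x) = 1" "\<And>i ai. Rbar r i ai (\<mu> i) = Lf rr i ai \<pi>"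
    using Suc.IH A F by auto
  have RR: "\<And>i. (\<lambda>ai. Rbar r i ai (\<mu> i)) = (\<lambda>ai. Rpure r i ai \<pi>)"
  proof -
    have "\<And>i ai. Rpure r i ai \<pi> = Lf rr i ai \<pi>"
      by (rule Rpure_Lf[where rr=rr]) (rule hr, rule IH(2))
    then show "\<And>i. (\<lambda>ai. Rbar r i ai (\<mu> i)) = (\<lambda>ai. Rpure r i ai \<pi>)" using IH(3) by auto
  qed
  define an' where "an' = (\<lambda>i. tb i (argmaxset (\<lambda>ai. Rpure r i ai \<pi>)))"
  have A': "aggfp r tb \<alpha> a0 (Suc k) = (an', \<lambda>i \<xi>. \<mu> i \<xi> + \<alpha> (Suc k) * (ind (agg i an' = \<xi>) - \<mu> i \<xi>),
              \<lambda>i x. \<gamma> i x + \<alpha> (Suc k) * (ind (an' i = x) - \<gamma> i x))"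
    by (simp add: A RR an'_def Let_def)
  have F': "fp r tb \<alpha> a0 (Suc k) = (an', \<lambda>j x. \<pi> j x + \<alpha> (Suc k) * (ind (an' j = x) - \<pi> j x))"
    by (simp add: F an'_def Let_def)
  have s: "\<And>l. (\<Sum>x\<in>UNIV. \<pi> l x + \<alpha> (Suc k) * (ind (an' l = x) - \<pi> l x)) = 1"
    using IH(2) by (simp add: sum.distrib sum_subtractf flip: sum_distrib_left) (simp add: ind_def)
  have "\<And>i ai. Rbar r i ai (\<lambda>\<xi>. \<mu> i \<xi> + \<alpha> (Suc k) * (ind (agg i an' = \<xi>) - \<mu> i \<xi>))
        = Lf rr i ai (\<lambda>j x. \<pi> j x + \<alpha> (Suc k) * (ind (an' j = x) - \<pi> j x))"
    unfolding Rbar_lin Lf_lin IH(3) Rbar_ind[OF hr an] Lf_def by simp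
  then show ?case using A' F' IH(1) s by simp
qed

theorem lemma4:
  fixes r :: "'i::finite \<Rightarrow> ('i \<Rightarrow> 'a::finite) \<Rightarrow> real"
    and tb :: "'i \<Rightarrow> 'a set \<Rightarrow> 'a"
    and \<alpha> :: "nat \<Rightarrow> real"
    and a0 :: "'i \<Rightarrow> 'a"
  assumes "polymatrix r" and "anonymous r"
    and "tie_break tb"
    and "\<And>k. k \<ge> 1 \<Longrightarrow> 0 < \<alpha> k \<and> \<alpha> k \<le> 1"
    and "\<not> summable (\<lambda>k. \<alpha> (Suc k))"
    and "summable (\<lambda>k. (\<alpha> (Suc k))\<^sup>2)"
  shows "(\<lambda>k. INF p\<in>NE r. pdist (aggfp_gamma r tb \<alpha> a0 k) p) \<longlonglongrightarrow> 0
         \<longleftrightarrow> (\<lambda>k. INF p\<in>NE r. pdist (fp_pi r tb \<alpha> a0 k) p) \<longlonglongrightarrow> 0"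
proof -
  obtain rr :: "'i \<Rightarrow> 'i \<Rightarrow> 'a \<Rightarrow> 'a \<Rightarrow> real" where hr: "\<And>i a. r i a = (\<Sum>j\<in>UNIV - {i}. rr i j (a i) (a j))"
    using assms(1) unfolding polymatrix_def by blast
  have "\<And>k. aggfp_gamma r tb \<alpha> a0 k = fp_pi r tb \<alpha> a0 k"
    unfolding aggfp_gamma_def fp_pi_def using inv[OF hr assms(2)] by blast
  then show ?thesis by simp
qed

end
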